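(* Let $X$ be a real normed linear space with zero $\theta$, $\dim X>1$, whose norm is strictly convex. Let $f\colon X\to X$ be a motion such that there exists $x\in X$ with $\|f(x)\|\leqslant\|x\|$ and $\|f(-x)\|\leqslant\|x\|$. Then the shift component of $f$ is trivial, i.e. $f(\theta)=\theta$.
   Context: A motion of $X$ is a surjective map $f\colon X\to X$ with $\|f(x)-f(y)\|=\|x-y\|$ for all $x,y$. Every motion decomposes uniquely as $f=h\circ g$ with $g$ a motion fixing $\theta$ and $h(x)=x+a$ a translation (here $a=f(\theta)$); $h$ is called the shift component, and it is trivial when $h$ is the identity, i.e. $a=\theta$. The norm is strictly convex if for all $x\ne y$ with $\|x\|=\|y\|=1$ and all $\lambda\in(0,1)$ one has $\|\lambda x+(1-\lambda)y\|<1$. *)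

theory Defs
  imports "HOL-Analysis.Analysis"
begin

definition motion :: "('a::real_normed_vector \<Rightarrow> 'a) \<Rightarrow> bool" where
  "motion f \<longleftrightarrow> surj f \<and> (\<forall>x y. norm (f x - f y) = norm (x - y))"

definition strictly_convex_norm :: "'a::real_normed_vector itself \<Rightarrow> bool" where
  "strictly_convex_norm TYPE('a) \<longleftrightarrow>
     (\<forall>x y::'a. x \<noteq> y \<longrightarrow> norm x = 1 \<longrightarrow> norm y = 1 \<longrightarrow>
        (\<forall>t::real. 0 < t \<and> t < 1 \<longrightarrow> norm (t *\<^sub>R x + (1 - t) *\<^sub>R y) < 1))"

definition shift_component :: "('a::real_normed_vector \<Rightarrow> 'a) \<Rightarrow> 'a \<Rightarrow> 'a" where
  "shift_component f = (\<lambda>x. x + f 0)"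

end

theory Submission
  imports Defs
begin

lemma sc_eq:
  fixes p q :: "'a::real_normed_vector"
  assumes strict: "strictly_convex_norm TYPE('a)"
    and r: "r > 0" and np: "norm p = r" and nq: "norm q = r" and npq: "norm (p + q) = 2 * r"
  shows "p = q"
proof (rule ccontr)
  assume ne: "p \<noteq> q"
  let ?u = "(1/r) *\<^sub>R p" and ?v = "(1/r) *\<^sub>R q"
  have h1: "?u \<noteq> ?v" using ne r by simp
  have h2: "norm ?u = 1" and h3: "norm ?v = 1" using np nq r by simp_all
  have "norm ((1/2::real) *\<^sub>R ?u + (1 - 1/2) *\<^sub>R ?v) < 1"
  proof -
    have H: "\<forall>x y::'a. x \<noteq> y \<longrightarrow> norm x = 1 \<longrightarrow> norm y = 1 \<longrightarrow>
        (\<forall>t::real. 0 < t \<and> t < 1 \<longrightarrow> norm (t *\<^sub>R x + (1 - t) *\<^sub>R y) < 1)"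
      using strict unfolding strictly_convex_norm_def by blast
    show ?thesis using H[rule_format, OF h1 h2 h3, of "1/2"] by simp
  qed
  moreover have "(1/2::real) *\<^sub>R ?u + (1 - 1/2) *\<^sub>R ?v = (1/(2*r)) *\<^sub>R (p + q)"
    by (simp add: scaleR_add_right)
  moreover have "norm ((1/(2*r)) *\<^sub>R (p + q)) = 1" using npq r by simp
  ultimately show False by (metis less_irrefl)
qed

theorem lemma4:
  fixes f :: "'a::real_normed_vector \<Rightarrow> 'a"
  assumes dim_gt_1: "\<exists>u v::'a. u \<noteq> v \<and> independent {u, v}"
    and strict: "strictly_convex_norm TYPE('a)"
    and mot: "motion f"
    and ex: "\<exists>x. norm (f x) \<le> norm x \<and> norm (f (- x)) \<le> norm x"
  shows "shift_component f = id \<and> f 0 = 0"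
proof -
  obtain x where ha: "norm (f x) \<le> norm x" and hb: "norm (f (- x)) \<le> norm x" using ex by blast
  have iso: "\<And>y z. norm (f y - f z) = norm (y - z)" using mot unfolding motion_def by blast
  define a where "a = f x"
  define b where "b = f (- x)"
  define c where "c = f 0"
  define r where "r = norm x"
  have ab: "norm (a - b) = 2 * r" using iso[of x "-x"] unfolding a_def b_def r_def
    by (simp flip: scaleR_2)
  have ac: "norm (a - c) = r" using iso[of x 0] unfolding a_def c_def r_def by simp
  have cb: "norm (c - b) = r" using iso[of 0 "-x"] unfolding b_def c_def r_def by simp
  have "c = 0"
  proof (cases "r = 0")
    case True
    then show ?thesis using ac ha unfolding a_def r_def by simp
  next
    case False
    then have rp: "r > 0" unfolding r_def by simp
    have "norm (a - b) \<le> norm a + norm b" by (rule norm_triangle_ineq4)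
    then have na: "norm a = r" and nb: "norm b = r" using ab ha hb unfolding a_def b_def r_def by linarith+
    have "a - c = c - b" using sc_eq[OF strict rp ac cb] ab by simp
    moreover have "a = - b" using sc_eq[OF strict rp na, of "- b"] nb ab by simp
    ultimately have "c + c = a + b" by (metis add.commute diff_add_eq diff_eq_eq add_diff_eq)
    then have "c + c = 0" using \<open>a = - b\<close> by simp
    then show ?thesis by (metis scaleR_2 scaleR_eq_0_iff zero_neq_numeral)
  qed
  then have "f 0 = 0" unfolding c_def .
  then show ?thesis unfolding shift_component_def by (simp add: id_def)
qed

end
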